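(* For fixed $N\ge1$, $\omega_1,\dots,\omega_N\in\mathbb{R}$ and $\kappa\ne0$, the system \[ \dot\theta_i=\omega_i-\frac{\kappa}{N}\sum_{j=1}^N(1+\cos\theta_j)\sin\theta_i,\qquad i=1,\dots,N, \] has at most $2^{N+1}$ equilibria that are distinct modulo $2\pi$.
   Context: An equilibrium is $\Theta\in\mathbb{R}^N$ at which all right-hand sides vanish; two equilibria are distinct modulo $2\pi$ if they differ as points of $(\mathbb{R}/2\pi\mathbb{Z})^N$. *)

theory Defs
  imports "HOL-Analysis.Analysis"
begin

text \<open>Right-hand side of the i-th equation, indices i = 0..N-1.\<close>
definition rhs :: "nat \<Rightarrow> (nat \<Rightarrow> real) \<Rightarrow> real \<Rightarrow> (nat \<Rightarrow> real) \<Rightarrow> nat \<Rightarrow> real" where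
  "rhs N \<omega> \<kappa> \<theta> i = \<omega> i - \<kappa> / real N * (\<Sum>j<N. 1 + cos (\<theta> j)) * sin (\<theta> i)"

definition is_equilibrium :: "nat \<Rightarrow> (nat \<Rightarrow> real) \<Rightarrow> real \<Rightarrow> (nat \<Rightarrow> real) \<Rightarrow> bool" where
  "is_equilibrium N \<omega> \<kappa> \<theta> \<longleftrightarrow> (\<forall>i<N. rhs N \<omega> \<kappa> \<theta> i = 0)"

definition cong_2pi :: "nat \<Rightarrow> (nat \<Rightarrow> real) \<Rightarrow> (nat \<Rightarrow> real) \<Rightarrow> bool" where
  "cong_2pi N \<theta> \<phi> \<longleftrightarrow> (\<forall>i<N. \<exists>k::int. \<theta> i - \<phi> i = 2 * pi * of_int k)"

end

theory Submission
  imports Defs "HOL-Computational_Algebra.Polynomial"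
begin


definition sg :: "nat set \<Rightarrow> nat \<Rightarrow> complex" where
  "sg T i = (if i \<in> T then -1 else 1)"

definition bs :: "bool \<Rightarrow> complex" where "bs b = (if b then 1 else -1)"

lemma norm_closed:
  fixes C :: "((nat \<Rightarrow> bool) \<Rightarrow> 'x \<Rightarrow> complex) set" and c :: "nat \<Rightarrow> 'x \<Rightarrow> complex"
  assumes "finite I"
  shows "\<And>C a. (\<forall>f\<in>C. \<forall>g\<in>C. (\<lambda>\<sigma> x. f \<sigma> x + g \<sigma> x) \<in> C) \<Longrightarrow>
     (\<forall>f\<in>C. \<forall>g\<in>C. (\<lambda>\<sigma> x. f \<sigma> x * g \<sigma> x) \<in> C) \<Longrightarrow>
     (\<forall>f\<in>C. (\<lambda>\<sigma> x. - f \<sigma> x) \<in> C) \<Longrightarrow>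
     (\<lambda>\<sigma> x. 1) \<in> C \<Longrightarrow>
     (\<forall>f\<in>C. \<forall>i\<in>I. \<forall>\<sigma>. f (\<sigma>(i := True)) = f \<sigma>) \<Longrightarrow>
     (\<forall>i\<in>I. (\<lambda>\<sigma> x. c i x ^ 2) \<in> C) \<Longrightarrow> a \<in> C \<Longrightarrow>
     (\<lambda>\<sigma> x. \<Prod>T\<in>Pow I. a \<sigma> x - (\<Sum>i\<in>I. sg T i * c i x)) \<in> C"
  using assms
proof (induction I rule: finite_induct)
  case empty
  then show ?case by simp
next
  case (insert j I C a)
  have indep: "f (\<sigma>(i := b)) = f \<sigma>" if "f \<in> C" "i \<in> insert j I" for f \<sigma> i b
  proof (cases b)
    case True
    have "f (\<sigma>(i := True)) = f \<sigma>" using insert.prems(5) that by blast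
    then show ?thesis using True by simp
  next
    case False
    have "f (\<sigma>(i := False)) = f ((\<sigma>(i := False))(i := True))"
      using insert.prems(5) that by metis
    also have "\<dots> = f (\<sigma>(i := True))" by simp
    also have "\<dots> = f \<sigma>" using insert.prems(5) that by blast
    finally show ?thesis using False by simp
  qed
  define C' where "C' = {h. \<exists>u\<in>C. \<exists>v\<in>C. h = (\<lambda>\<sigma> x. u \<sigma> x + v \<sigma> x * bs (\<sigma> j) * c j x)}"
  have C'I: "h \<in> C'" if "u \<in> C" "v \<in> C" "h = (\<lambda>\<sigma> x. u \<sigma> x + v \<sigma> x * bs (\<sigma> j) * c j x)" for u v h
    unfolding C'_def using that by blast
  have zeroC: "(\<lambda>\<sigma> x. 0) \<in> C"
  proof -
    have "(\<lambda>\<sigma> x. 1 + - 1) \<in> C" using insert.prems(1,3,4) by fastforce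
    then show ?thesis by simp
  qed
  have CC': "f \<in> C'" if "f \<in> C" for f
  proof -
    show ?thesis unfolding C'_def mem_Collect_eq
      by (rule bexI[where x=f], rule bexI[where x="\<lambda>\<sigma> x. 0"]) (use that zeroC in auto)
  qed
  have bs2: "bs b * bs b = 1" for b by (simp add: bs_def)
  have "(\<lambda>\<sigma> x. \<Prod>T\<in>Pow I. (a \<sigma> x - bs (\<sigma> j) * c j x) - (\<Sum>i\<in>I. sg T i * c i x)) \<in> C'"
  proof (rule insert.IH)
    show "\<forall>f\<in>C'. \<forall>g\<in>C'. (\<lambda>\<sigma> x. f \<sigma> x + g \<sigma> x) \<in> C'"
    proof (intro ballI)
      fix f g assume "f \<in> C'" "g \<in> C'"
      then obtain u v u' v' where "u \<in> C" "v \<in> C" "u' \<in> C" "v' \<in> C"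
        and f: "f = (\<lambda>\<sigma> x. u \<sigma> x + v \<sigma> x * bs (\<sigma> j) * c j x)"
        and g: "g = (\<lambda>\<sigma> x. u' \<sigma> x + v' \<sigma> x * bs (\<sigma> j) * c j x)"
        unfolding C'_def by blast
      have "(\<lambda>\<sigma> x. f \<sigma> x + g \<sigma> x) = (\<lambda>\<sigma> x. (u \<sigma> x + u' \<sigma> x) + (v \<sigma> x + v' \<sigma> x) * bs (\<sigma> j) * c j x)"
        unfolding f g by (auto simp: algebra_simps)
      moreover have "(\<lambda>\<sigma> x. u \<sigma> x + u' \<sigma> x) \<in> C" "(\<lambda>\<sigma> x. v \<sigma> x + v' \<sigma> x) \<in> C"
        using insert.prems(1) \<open>u \<in> C\<close> \<open>v \<in> C\<close> \<open>u' \<in> C\<close> \<open>v' \<in> C\<close> by auto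
      ultimately show "(\<lambda>\<sigma> x. f \<sigma> x + g \<sigma> x) \<in> C'" by (intro C'I)
    qed
    show "\<forall>f\<in>C'. \<forall>g\<in>C'. (\<lambda>\<sigma> x. f \<sigma> x * g \<sigma> x) \<in> C'"
    proof (intro ballI)
      fix f g assume "f \<in> C'" "g \<in> C'"
      then obtain u v u' v' where uv: "u \<in> C" "v \<in> C" "u' \<in> C" "v' \<in> C"
        and f: "f = (\<lambda>\<sigma> x. u \<sigma> x + v \<sigma> x * bs (\<sigma> j) * c j x)"
        and g: "g = (\<lambda>\<sigma> x. u' \<sigma> x + v' \<sigma> x * bs (\<sigma> j) * c j x)"
        unfolding C'_def by blast
      have "(\<lambda>\<sigma> x. f \<sigma> x * g \<sigma> x) = (\<lambda>\<sigma> x. (u \<sigma> x * u' \<sigma> x + (v \<sigma> x * v' \<sigma> x) * c j x ^ 2)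
          + (u \<sigma> x * v' \<sigma> x + v \<sigma> x * u' \<sigma> x) * bs (\<sigma> j) * c j x)"
      proof (intro ext)
        fix \<sigma> x
        have "f \<sigma> x * g \<sigma> x = u \<sigma> x * u' \<sigma> x + (v \<sigma> x * v' \<sigma> x) * (bs (\<sigma> j) * bs (\<sigma> j)) * c j x ^ 2
          + (u \<sigma> x * v' \<sigma> x + v \<sigma> x * u' \<sigma> x) * bs (\<sigma> j) * c j x"
          unfolding f g by (simp add: algebra_simps power2_eq_square)
        then show "f \<sigma> x * g \<sigma> x = (u \<sigma> x * u' \<sigma> x + (v \<sigma> x * v' \<sigma> x) * c j x ^ 2)
          + (u \<sigma> x * v' \<sigma> x + v \<sigma> x * u' \<sigma> x) * bs (\<sigma> j) * c j x" by (simp add: bs2)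
      qed
      moreover have "(\<lambda>\<sigma> x. u \<sigma> x * u' \<sigma> x + (v \<sigma> x * v' \<sigma> x) * c j x ^ 2) \<in> C"
      proof -
        have "(\<lambda>\<sigma> x. v \<sigma> x * v' \<sigma> x) \<in> C" using insert.prems(2) uv by auto
        then have "(\<lambda>\<sigma> x. (v \<sigma> x * v' \<sigma> x) * c j x ^ 2) \<in> C" using insert.prems(2,6) by auto
        moreover have "(\<lambda>\<sigma> x. u \<sigma> x * u' \<sigma> x) \<in> C" using insert.prems(2) uv by auto
        ultimately show ?thesis using insert.prems(1) by fastforce
      qed
      moreover have "(\<lambda>\<sigma> x. u \<sigma> x * v' \<sigma> x + v \<sigma> x * u' \<sigma> x) \<in> C"
      proof -
        have "(\<lambda>\<sigma> x. u \<sigma> x * v' \<sigma> x) \<in> C" "(\<lambda>\<sigma> x. v \<sigma> x * u' \<sigma> x) \<in> C"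
          using insert.prems(2) uv by auto
        then show ?thesis using insert.prems(1) by fastforce
      qed
      ultimately show "(\<lambda>\<sigma> x. f \<sigma> x * g \<sigma> x) \<in> C'" by (intro C'I)
    qed
    show "\<forall>f\<in>C'. (\<lambda>\<sigma> x. - f \<sigma> x) \<in> C'"
    proof
      fix f assume "f \<in> C'"
      then obtain u v where uv: "u \<in> C" "v \<in> C"
        and f: "f = (\<lambda>\<sigma> x. u \<sigma> x + v \<sigma> x * bs (\<sigma> j) * c j x)"
        unfolding C'_def by blast
      have "(\<lambda>\<sigma> x. - f \<sigma> x) = (\<lambda>\<sigma> x. (- u \<sigma> x) + (- v \<sigma> x) * bs (\<sigma> j) * c j x)"
        unfolding f by (auto simp: algebra_simps)
      moreover have "(\<lambda>\<sigma> x. - u \<sigma> x) \<in> C" "(\<lambda>\<sigma> x. - v \<sigma> x) \<in> C" using insert.prems(3) uv by auto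
      ultimately show "(\<lambda>\<sigma> x. - f \<sigma> x) \<in> C'" by (intro C'I)
    qed
    show "(\<lambda>\<sigma> x. 1) \<in> C'" using CC' insert.prems(4) by blast
    show "\<forall>f\<in>C'. \<forall>i\<in>I. \<forall>\<sigma>. f (\<sigma>(i := True)) = f \<sigma>"
    proof (intro ballI allI)
      fix f i \<sigma> assume "f \<in> C'" "i \<in> I"
      then obtain u v where uv: "u \<in> C" "v \<in> C"
        and f: "f = (\<lambda>\<sigma> x. u \<sigma> x + v \<sigma> x * bs (\<sigma> j) * c j x)"
        unfolding C'_def by blast
      have "i \<noteq> j" using \<open>i \<in> I\<close> insert.hyps by auto
      then show "f (\<sigma>(i := True)) = f \<sigma>" unfolding f using indep[OF uv(1)] indep[OF uv(2)] \<open>i \<in> I\<close> by auto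
    qed
    show "\<forall>i\<in>I. (\<lambda>\<sigma> x. c i x ^ 2) \<in> C'" using CC' insert.prems(6) by auto
    show "(\<lambda>\<sigma> x. a \<sigma> x - bs (\<sigma> j) * c j x) \<in> C'"
    proof -
      have "(\<lambda>\<sigma> x. - 1) \<in> C" using insert.prems(3,4) by fastforce
      moreover have "(\<lambda>\<sigma> x. a \<sigma> x - bs (\<sigma> j) * c j x) = (\<lambda>\<sigma> x. a \<sigma> x + (- 1) * bs (\<sigma> j) * c j x)" by auto
      ultimately show ?thesis using insert.prems(7) by (intro C'I)
    qed
  qed
  then obtain u v where uv: "u \<in> C" "v \<in> C" and G:
    "(\<lambda>\<sigma> x. \<Prod>T\<in>Pow I. (a \<sigma> x - bs (\<sigma> j) * c j x) - (\<Sum>i\<in>I. sg T i * c i x))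
      = (\<lambda>\<sigma> x. u \<sigma> x + v \<sigma> x * bs (\<sigma> j) * c j x)" unfolding C'_def by blast
  have G': "(\<Prod>T\<in>Pow I. (a \<sigma> x - bs b * c j x) - (\<Sum>i\<in>I. sg T i * c i x))
      = u \<sigma> x + v \<sigma> x * bs b * c j x" for \<sigma> x b
  proof -
    have "(\<Prod>T\<in>Pow I. (a \<sigma> x - bs b * c j x) - (\<Sum>i\<in>I. sg T i * c i x))
       = (\<Prod>T\<in>Pow I. (a (\<sigma>(j:=b)) x - bs ((\<sigma>(j:=b)) j) * c j x) - (\<Sum>i\<in>I. sg T i * c i x))"
      by (simp only: indep[OF insert.prems(7), of j \<sigma> b] insertI1 fun_upd_same)
    also have "\<dots> = u (\<sigma>(j:=b)) x + v (\<sigma>(j:=b)) x * bs ((\<sigma>(j:=b)) j) * c j x"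
      using fun_cong[OF fun_cong[OF G, of "\<sigma>(j:=b)"], of x] by simp
    also have "\<dots> = u \<sigma> x + v \<sigma> x * bs b * c j x" using indep[OF uv(1)] indep[OF uv(2)] by simp
    finally show ?thesis .
  qed
  have split: "(\<Prod>T\<in>Pow (insert j I). a \<sigma> x - (\<Sum>i\<in>insert j I. sg T i * c i x))
     = (\<Prod>T\<in>Pow I. (a \<sigma> x - bs True * c j x) - (\<Sum>i\<in>I. sg T i * c i x)) *
       (\<Prod>T\<in>Pow I. (a \<sigma> x - bs False * c j x) - (\<Sum>i\<in>I. sg T i * c i x))" for \<sigma> x
  proof -
    have disj: "Pow I \<inter> insert j ` Pow I = {}" using insert.hyps by auto
    have inj: "inj_on (insert j) (Pow I)" unfolding inj_on_def
    proof (intro ballI impI)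
      fix x y assume "x \<in> Pow I" "y \<in> Pow I" "insert j x = insert j y"
      then have "j \<notin> x" "j \<notin> y" using insert.hyps by auto
      then show "x = y" using \<open>insert j x = insert j y\<close> by (metis Diff_insert_absorb)
    qed
    have "(\<Prod>T\<in>Pow (insert j I). a \<sigma> x - (\<Sum>i\<in>insert j I. sg T i * c i x))
      = (\<Prod>T\<in>Pow I. a \<sigma> x - (\<Sum>i\<in>insert j I. sg T i * c i x)) *
        (\<Prod>T\<in>insert j ` Pow I. a \<sigma> x - (\<Sum>i\<in>insert j I. sg T i * c i x))"
      unfolding Pow_insert using disj insert.hyps by (intro prod.union_disjoint) auto
    also have "(\<Prod>T\<in>insert j ` Pow I. a \<sigma> x - (\<Sum>i\<in>insert j I. sg T i * c i x))
       = (\<Prod>T\<in>Pow I. a \<sigma> x - (\<Sum>i\<in>insert j I. sg (insert j T) i * c i x))"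
      using prod.reindex[OF inj] by simp
    also have "\<dots> = (\<Prod>T\<in>Pow I. (a \<sigma> x - bs False * c j x) - (\<Sum>i\<in>I. sg T i * c i x))"
    proof (intro prod.cong refl)
      fix T assume "T \<in> Pow I"
      have "(\<Sum>i\<in>I. sg (insert j T) i * c i x) = (\<Sum>i\<in>I. sg T i * c i x)"
        using insert.hyps by (intro sum.cong refl) (auto simp: sg_def)
      then show "a \<sigma> x - (\<Sum>i\<in>insert j I. sg (insert j T) i * c i x) = (a \<sigma> x - bs False * c j x) - (\<Sum>i\<in>I. sg T i * c i x)"
        using insert.hyps by (simp add: sg_def bs_def)
    qed
    also have "(\<Prod>T\<in>Pow I. a \<sigma> x - (\<Sum>i\<in>insert j I. sg T i * c i x))
       = (\<Prod>T\<in>Pow I. (a \<sigma> x - bs True * c j x) - (\<Sum>i\<in>I. sg T i * c i x))"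
    proof (intro prod.cong refl)
      fix T assume "T \<in> Pow I"
      then have "j \<notin> T" using insert.hyps by auto
      then show "a \<sigma> x - (\<Sum>i\<in>insert j I. sg T i * c i x) = (a \<sigma> x - bs True * c j x) - (\<Sum>i\<in>I. sg T i * c i x)"
        using insert.hyps by (simp add: sg_def bs_def)
    qed
    finally show ?thesis .
  qed
  have "(\<lambda>\<sigma> x. \<Prod>T\<in>Pow (insert j I). a \<sigma> x - (\<Sum>i\<in>insert j I. sg T i * c i x))
     = (\<lambda>\<sigma> x. u \<sigma> x * u \<sigma> x + (- (v \<sigma> x * v \<sigma> x)) * c j x ^ 2)"
    unfolding split G' by (auto simp: bs_def algebra_simps power2_eq_square)
  moreover have "(\<lambda>\<sigma> x. u \<sigma> x * u \<sigma> x + (- (v \<sigma> x * v \<sigma> x)) * c j x ^ 2) \<in> C"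
  proof -
    have "(\<lambda>\<sigma> x. v \<sigma> x * v \<sigma> x) \<in> C" using insert.prems(2) uv by auto
    then have "(\<lambda>\<sigma> x. - (v \<sigma> x * v \<sigma> x)) \<in> C" using insert.prems(3) by auto
    then have "(\<lambda>\<sigma> x. (- (v \<sigma> x * v \<sigma> x)) * c j x ^ 2) \<in> C" using insert.prems(2,6) by auto
    moreover have "(\<lambda>\<sigma> x. u \<sigma> x * u \<sigma> x) \<in> C" using insert.prems(2) uv by auto
    ultimately show ?thesis using insert.prems(1) by fastforce
  qed
  ultimately show ?case by simp
qed



lemma poly_zero_of_bound:
  fixes Q :: "complex poly"
  assumes F: "at r within S \<noteq> bot"
    and ev: "eventually (\<lambda>y. norm (poly Q (of_real y)) \<le> K * \<bar>y - r\<bar> ^ j) (at r within S)"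
    and j: "j > 0"
  shows "poly Q (of_real r) = 0"
proof -
  have c: "((\<lambda>y. norm (poly Q (of_real y))) \<longlongrightarrow> norm (poly Q (of_real r))) (at r within S)"
  proof -
    have "isCont (\<lambda>y. norm (poly Q (of_real y))) r" by (intro continuous_intros)
    then show ?thesis using isCont_def tendsto_within_subset[OF _ subset_UNIV] by blast
  qed
  have z: "((\<lambda>y. K * \<bar>y - r\<bar> ^ j) \<longlongrightarrow> 0) (at r within S)"
  proof -
    have "((\<lambda>y. K * \<bar>y - r\<bar> ^ j) \<longlongrightarrow> K * \<bar>r - r\<bar> ^ j) (at r within S)"
      by (intro tendsto_intros)
    then show ?thesis using j by (simp add: power_0_left)
  qed
  have "norm (poly Q (of_real r)) \<le> 0" using tendsto_le[OF F z c ev] .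
  then show ?thesis by simp
qed

lemma order_ge_of_bound:
  fixes P :: "complex poly"
  assumes P: "P \<noteq> 0"
    and ev: "eventually (\<lambda>y. norm (poly P (of_real y)) \<le> K * \<bar>y - r\<bar> ^ m) (nhds r)"
  shows "m \<le> order (of_real r) P"
proof (rule ccontr)
  assume "\<not> ?thesis"
  then have km: "order (of_real r) P < m" by simp
  define k where "k = order (of_real r) P"
  obtain Q where PQ: "P = [:- of_real r, 1:] ^ k * Q" and nd: "\<not> [:- of_real r, 1:] dvd Q"
    using order_decomp[OF P] unfolding k_def by blast
  have Qr: "poly Q (of_real r) \<noteq> 0" using nd by (simp add: poly_eq_0_iff_dvd)
  have "eventually (\<lambda>y. norm (poly Q (of_real y)) \<le> K * \<bar>y - r\<bar> ^ (m - k)) (at r)"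
    using ev unfolding eventually_at_filter
  proof (rule eventually_mono)
    fix y assume H: "norm (poly P (of_real y)) \<le> K * \<bar>y - r\<bar> ^ m"
    show "y \<noteq> r \<longrightarrow> y \<in> UNIV \<longrightarrow> norm (poly Q (of_real y)) \<le> K * \<bar>y - r\<bar> ^ (m - k)"
    proof (intro impI)
      assume "y \<noteq> r"
      then have pos: "\<bar>y - r\<bar> ^ k > 0" by simp
      have "norm (poly P (of_real y)) = \<bar>y - r\<bar> ^ k * norm (poly Q (of_real y))"
        unfolding PQ by (simp add: poly_power norm_mult norm_power flip: of_real_diff)
      moreover have "\<bar>y - r\<bar> ^ m = \<bar>y - r\<bar> ^ k * \<bar>y - r\<bar> ^ (m - k)"
        using km unfolding k_def by (simp flip: power_add)
      ultimately have "\<bar>y - r\<bar> ^ k * norm (poly Q (of_real y)) \<le> \<bar>y - r\<bar> ^ k * (K * \<bar>y - r\<bar> ^ (m - k))"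
        using H by (simp add: algebra_simps)
      then show "norm (poly Q (of_real y)) \<le> K * \<bar>y - r\<bar> ^ (m - k)"
        using pos by (simp add: mult_le_cancel_left)
    qed
  qed
  then have "poly Q (of_real r) = 0"
    by (intro poly_zero_of_bound[of r UNIV _ K "m - k"]) (use km k_def in auto)
  with Qr show False by simp
qed

lemma degree_le_of_bound:
  fixes P :: "complex poly"
  assumes P: "P \<noteq> 0" and x0: "x0 > 0"
    and bd: "\<And>x. x \<ge> x0 \<Longrightarrow> norm (poly P (of_real x)) \<le> K * x ^ k"
  shows "degree P \<le> k"
proof (rule ccontr)
  assume "\<not> ?thesis"
  then have kn: "k < degree P" by simp
  define n where "n = degree P"
  have "eventually (\<lambda>y. norm (poly (reflect_poly P) (of_real y)) \<le> K * \<bar>y - 0\<bar> ^ (n - k)) (at_right 0)"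
  proof -
  have "eventually (\<lambda>y. y \<in> {0<..<1/x0}) (at_right 0)" using x0 by (intro eventually_at_right_real) simp
  then show ?thesis
  proof (rule eventually_mono)
    fix y assume "y \<in> {0<..<1/x0}"
    then have y: "y > 0" "y < 1 / x0" by auto
    then have yx: "1 / y \<ge> x0" using x0 by (simp add: field_simps)
    have "poly (reflect_poly P) (of_real y) = (of_real y) ^ n * poly P (of_real (1 / y))"
      using y unfolding n_def by (simp add: poly_reflect_poly_nz of_real_inverse divide_inverse)
    then have "norm (poly (reflect_poly P) (of_real y)) = y ^ n * norm (poly P (of_real (1 / y)))"
      using y by (simp add: norm_mult norm_power)
    also have "\<dots> \<le> y ^ n * (K * (1 / y) ^ k)"
      using bd[OF yx] y by (intro mult_left_mono) auto
    also have "\<dots> = K * y ^ (n - k)"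
    proof -
      have "y ^ n = y ^ (n - k) * y ^ k" using kn unfolding n_def by (simp flip: power_add)
      then show ?thesis using y by (simp add: power_one_over field_simps)
    qed
    finally show "norm (poly (reflect_poly P) (of_real y)) \<le> K * \<bar>y - 0\<bar> ^ (n - k)" using y by simp
  qed
  qed
  then have "poly (reflect_poly P) (of_real 0) = 0"
    by (intro poly_zero_of_bound[of 0 "{0<..}" _ K "n - k"]) (use kn n_def in auto)
  then have "coeff (reflect_poly P) 0 = 0" by (simp add: poly_0_coeff_0)
  then show False using P by simp
qed

lemma sum_order_le:
  fixes P :: "complex poly"
  assumes "P \<noteq> 0" "finite S"
  shows "(\<Sum>r\<in>S. order r P) \<le> degree P"
proof -
  have "(\<Sum>r\<in>S. order r P) = (\<Sum>r\<in>S \<inter> {x. poly P x = 0}. order r P)"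
  proof -
    have "\<forall>r. poly P r \<noteq> 0 \<longrightarrow> order r P = 0" using order_0I by blast
    then show ?thesis using assms by (intro sum.mono_neutral_right) auto
  qed
  also have "\<dots> \<le> (\<Sum>r | poly P r = 0. order r P)"
    using assms poly_roots_finite[of P] by (intro sum_mono2) auto
  also have "\<dots> \<le> degree P" using sum_order_le_degree[OF assms(1)] .
  finally show ?thesis .
qed



definition lipat :: "real \<Rightarrow> (real \<Rightarrow> complex) \<Rightarrow> bool" where
  "lipat r f \<longleftrightarrow> (\<exists>K. eventually (\<lambda>x. norm (f x - f r) \<le> K * \<bar>x - r\<bar>) (nhds r))"

lemma ev_near: "eventually (\<lambda>x. \<bar>x - r\<bar> < (1::real)) (nhds r)"
  by (auto simp: eventually_nhds_metric dist_real_def intro!: exI[of _ 1])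

lemma lipat_const: "lipat r (\<lambda>x. c)"
  unfolding lipat_def by (intro exI[of _ 0]) simp

lemma lipat_id: "lipat r (\<lambda>x. of_real x)"
  unfolding lipat_def by (intro exI[of _ 1]) (simp flip: of_real_diff)

lemma lipat_add: "lipat r f \<Longrightarrow> lipat r g \<Longrightarrow> lipat r (\<lambda>x. f x + g x)"
  unfolding lipat_def
proof (elim exE)
  fix K L assume f: "eventually (\<lambda>x. norm (f x - f r) \<le> K * \<bar>x - r\<bar>) (nhds r)"
    and g: "eventually (\<lambda>x. norm (g x - g r) \<le> L * \<bar>x - r\<bar>) (nhds r)"
  have "eventually (\<lambda>x. norm ((f x + g x) - (f r + g r)) \<le> (K + L) * \<bar>x - r\<bar>) (nhds r)"
    using f g
  proof (eventually_elim)
    case (elim x)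
    have "norm ((f x + g x) - (f r + g r)) \<le> norm (f x - f r) + norm (g x - g r)"
      by (metis add_diff_add norm_triangle_ineq)
    then show ?case using elim by (simp add: algebra_simps)
  qed
  then show "\<exists>K. eventually (\<lambda>x. norm ((f x + g x) - (f r + g r)) \<le> K * \<bar>x - r\<bar>) (nhds r)" by blast
qed

lemma lipat_neg: "lipat r f \<Longrightarrow> lipat r (\<lambda>x. - f x)"
proof -
  have e: "norm (- f x - - f r) = norm (f x - f r)" for x
    by (metis minus_diff_eq minus_diff_minus norm_minus_cancel)
  assume "lipat r f" then show ?thesis unfolding lipat_def e .
qed

lemma lipat_bound: "lipat r f \<Longrightarrow> \<exists>B. eventually (\<lambda>x. norm (f x) \<le> B) (nhds r)"
  unfolding lipat_def
proof (elim exE)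
  fix K assume f: "eventually (\<lambda>x. norm (f x - f r) \<le> K * \<bar>x - r\<bar>) (nhds r)"
  have "eventually (\<lambda>x. norm (f x) \<le> norm (f r) + \<bar>K\<bar>) (nhds r)"
    using f ev_near[of r]
  proof (eventually_elim)
    case (elim x)
    have "K * \<bar>x - r\<bar> \<le> \<bar>K\<bar> * \<bar>x - r\<bar>" by (intro mult_right_mono) auto
    also have "\<bar>K\<bar> * \<bar>x - r\<bar> \<le> \<bar>K\<bar> * 1" using elim(2) by (intro mult_left_mono) auto
    finally have "K * \<bar>x - r\<bar> \<le> \<bar>K\<bar> * 1" .
    moreover have "norm (f x) \<le> norm (f r) + norm (f x - f r)" by (metis norm_triangle_sub)
    ultimately show ?case using elim(1) by simp
  qed
  then show "\<exists>B. eventually (\<lambda>x. norm (f x) \<le> B) (nhds r)" by blast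
qed

lemma lipat_mult: "lipat r f \<Longrightarrow> lipat r g \<Longrightarrow> lipat r (\<lambda>x. f x * g x)"
proof -
  assume lf: "lipat r f" and lg: "lipat r g"
  obtain B where B: "eventually (\<lambda>x. norm (g x) \<le> B) (nhds r)" using lipat_bound[OF lg] by blast
  obtain K where f: "eventually (\<lambda>x. norm (f x - f r) \<le> K * \<bar>x - r\<bar>) (nhds r)" using lf unfolding lipat_def by blast
  obtain L where g: "eventually (\<lambda>x. norm (g x - g r) \<le> L * \<bar>x - r\<bar>) (nhds r)" using lg unfolding lipat_def by blast
  have "eventually (\<lambda>x. norm (f x * g x - f r * g r) \<le> (K * B + norm (f r) * L) * \<bar>x - r\<bar>) (nhds r)"
    using f g B
  proof (eventually_elim)
    case (elim x)
    have eq: "f x * g x - f r * g r = (f x - f r) * g x + f r * (g x - g r)" by (simp add: algebra_simps)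
    have "norm (f x * g x - f r * g r) \<le> norm (f x - f r) * norm (g x) + norm (f r) * norm (g x - g r)"
      unfolding eq by (metis norm_mult norm_triangle_ineq)
    also have "\<dots> \<le> (K * \<bar>x - r\<bar>) * B + norm (f r) * (L * \<bar>x - r\<bar>)"
    proof (intro add_mono mult_mono mult_left_mono)
      show "0 \<le> K * \<bar>x - r\<bar>" using elim(1) norm_ge_zero order_trans by blast
    qed (use elim in auto)
    finally show ?case by (simp add: algebra_simps)
  qed
  then show ?thesis unfolding lipat_def by blast
qed

lemma csqrt_lip:
  assumes w: "w > 0"
  shows "norm (csqrt z - csqrt (of_real w)) \<le> norm (z - of_real w) / sqrt w"
proof -
  define a where "a = csqrt z"
  define b where "b = csqrt (of_real w)"
  have b: "b = of_real (sqrt w)" unfolding b_def using w by simp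
  have ab: "(a - b) * (a + b) = z - of_real w"
    unfolding a_def b_def by (simp add: algebra_simps power2_eq_square[symmetric])
  have "Re (a + b) \<ge> sqrt w" using Re_csqrt[of z] unfolding a_def b by simp
  then have nab: "norm (a + b) \<ge> sqrt w" using complex_Re_le_cmod order_trans by blast
  have sw: "sqrt w > 0" using w by simp
  have "norm (a - b) * norm (a + b) = norm (z - of_real w)" using ab by (metis norm_mult)
  then have "norm (a - b) * sqrt w \<le> norm (z - of_real w)"
    using nab by (metis mult_left_mono norm_ge_zero order_trans)
  then show ?thesis unfolding a_def b_def using sw by (simp add: field_simps)
qed

lemma lipat_csqrt:
  assumes "\<omega>^2 < r^2"
  shows "lipat r (\<lambda>x. csqrt (of_real (x^2 - \<omega>^2)))"
proof -
  define w where "w = r^2 - \<omega>^2"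
  have w: "w > 0" using assms unfolding w_def by simp
  have "eventually (\<lambda>x. norm (csqrt (of_real (x^2 - \<omega>^2)) - csqrt (of_real (r^2 - \<omega>^2)))
      \<le> ((2 * \<bar>r\<bar> + 1) / sqrt w) * \<bar>x - r\<bar>) (nhds r)"
    using ev_near[of r]
  proof (eventually_elim)
    case (elim x)
    have "norm (csqrt (of_real (x^2 - \<omega>^2)) - csqrt (of_real w)) \<le> norm (of_real (x^2 - \<omega>^2) - of_real w :: complex) / sqrt w"
      using csqrt_lip[OF w] .
    also have "norm (of_real (x^2 - \<omega>^2) - of_real w :: complex) = \<bar>x - r\<bar> * \<bar>x + r\<bar>"
    proof -
      have "norm (of_real (x^2 - \<omega>^2) - of_real w :: complex) = \<bar>x^2 - \<omega>^2 - w\<bar>"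
        by (metis norm_of_real of_real_diff)
      also have "\<dots> = \<bar>(x - r) * (x + r)\<bar>" unfolding w_def by (simp add: algebra_simps power2_eq_square)
      also have "\<dots> = \<bar>x - r\<bar> * \<bar>x + r\<bar>" by (simp add: abs_mult)
      finally show ?thesis .
    qed
    also have "\<bar>x + r\<bar> \<le> 2 * \<bar>r\<bar> + 1" using elim by linarith
    then have "\<bar>x - r\<bar> * \<bar>x + r\<bar> / sqrt w \<le> \<bar>x - r\<bar> * (2 * \<bar>r\<bar> + 1) / sqrt w"
      using w by (intro divide_right_mono mult_left_mono) auto
    finally show ?case unfolding w_def by (simp add: field_simps)
  qed
  then show ?thesis unfolding lipat_def by blast
qed

lemma lipat_zero: "lipat r f \<Longrightarrow> f r = 0 \<Longrightarrow> \<exists>K. eventually (\<lambda>x. norm (f x) \<le> K * \<bar>x - r\<bar> ^ 1) (nhds r)"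
  unfolding lipat_def by simp

lemma lipat_bound0: "lipat r f \<Longrightarrow> \<exists>K. eventually (\<lambda>x. norm (f x) \<le> K * \<bar>x - r\<bar> ^ 0) (nhds r)"
  using lipat_bound by simp

lemma prod_bound:
  fixes Q :: "'a \<Rightarrow> real \<Rightarrow> complex"
  assumes "finite F"
    and "\<forall>t\<in>F. \<exists>K. eventually (\<lambda>x. norm (Q t x) \<le> K * \<bar>x - r\<bar> ^ k t) (nhds r)"
  shows "\<exists>K. eventually (\<lambda>x. norm (\<Prod>t\<in>F. Q t x) \<le> K * \<bar>x - r\<bar> ^ (\<Sum>t\<in>F. k t)) (nhds r)"
  using assms
proof (induction F rule: finite_induct)
  case empty
  then show ?case by (intro exI[of _ 1]) simp
next
  case (insert t F)
  obtain K where K: "eventually (\<lambda>x. norm (Q t x) \<le> K * \<bar>x - r\<bar> ^ k t) (nhds r)" using insert.prems by blast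
  obtain L where L: "eventually (\<lambda>x. norm (\<Prod>t\<in>F. Q t x) \<le> L * \<bar>x - r\<bar> ^ (\<Sum>t\<in>F. k t)) (nhds r)"
    using insert.IH insert.prems by blast
  have "eventually (\<lambda>x. norm (\<Prod>t\<in>insert t F. Q t x) \<le> (K * L) * \<bar>x - r\<bar> ^ (\<Sum>t\<in>insert t F. k t)) (nhds r)"
    using K L
  proof (eventually_elim)
    case (elim x)
    have "norm (\<Prod>t\<in>insert t F. Q t x) = norm (Q t x) * norm (\<Prod>t\<in>F. Q t x)"
      using insert.hyps by (simp add: norm_mult)
    also have "\<dots> \<le> (K * \<bar>x - r\<bar> ^ k t) * (L * \<bar>x - r\<bar> ^ (\<Sum>t\<in>F. k t))"
      using elim by (intro mult_mono) (auto intro: order_trans[OF norm_ge_zero])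
    also have "\<dots> = (K * L) * \<bar>x - r\<bar> ^ (\<Sum>t\<in>insert t F. k t)"
      using insert.hyps by (simp add: power_add algebra_simps)
    finally show ?case .
  qed
  then show ?case by blast
qed



definition pp :: "nat \<Rightarrow> real \<Rightarrow> real \<Rightarrow> real" where
  "pp N \<kappa> x = real N * x^2 / \<kappa> - real N * x"

definition cc :: "(nat \<Rightarrow> real) \<Rightarrow> nat \<Rightarrow> real \<Rightarrow> complex" where
  "cc \<omega> i x = csqrt (of_real (x^2 - (\<omega> i)^2))"

definition FF :: "nat \<Rightarrow> real \<Rightarrow> (nat \<Rightarrow> real) \<Rightarrow> nat set \<Rightarrow> real \<Rightarrow> complex" where
  "FF N \<kappa> \<omega> T x = of_real (pp N \<kappa> x) - (\<Sum>i<N. sg T i * cc \<omega> i x)"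

definition DD :: "nat \<Rightarrow> real \<Rightarrow> (nat \<Rightarrow> real) \<Rightarrow> real \<Rightarrow> (nat \<Rightarrow> real) set" where
  "DD N \<kappa> \<omega> R = {d. (\<forall>i\<ge>N. d i = 0) \<and> (\<forall>i<N. (d i)^2 = R^2 - (\<omega> i)^2) \<and> (\<Sum>i<N. d i) = pp N \<kappa> R}"

lemma cc_sq: "cc \<omega> i x ^ 2 = of_real (x^2 - (\<omega> i)^2)"
  unfolding cc_def by simp

lemma poly_exists:
  "\<exists>P. \<forall>x. poly P (of_real x) = (\<Prod>T\<in>Pow {..<N}. FF N \<kappa> \<omega> T x)"
proof -
  define C :: "((nat \<Rightarrow> bool) \<Rightarrow> real \<Rightarrow> complex) set" where
    "C = {f. \<exists>P. \<forall>\<sigma> x. f \<sigma> x = poly P (of_real x)}"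
  have "(\<lambda>\<sigma> x. \<Prod>T\<in>Pow {..<N}. of_real (pp N \<kappa> x) - (\<Sum>i\<in>{..<N}. sg T i * cc \<omega> i x)) \<in> C"
  proof (rule norm_closed)
    show "\<forall>f\<in>C. \<forall>g\<in>C. (\<lambda>\<sigma> x. f \<sigma> x + g \<sigma> x) \<in> C"
    proof (intro ballI)
      fix f g assume "f \<in> C" "g \<in> C"
      then obtain P Q where "\<forall>\<sigma> x. f \<sigma> x = poly P (of_real x)" "\<forall>\<sigma> x. g \<sigma> x = poly Q (of_real x)"
        unfolding C_def by blast
      then show "(\<lambda>\<sigma> x. f \<sigma> x + g \<sigma> x) \<in> C" unfolding C_def by (intro CollectI exI[of _ "P + Q"]) simp
    qed
    show "\<forall>f\<in>C. \<forall>g\<in>C. (\<lambda>\<sigma> x. f \<sigma> x * g \<sigma> x) \<in> C"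
    proof (intro ballI)
      fix f g assume "f \<in> C" "g \<in> C"
      then obtain P Q where "\<forall>\<sigma> x. f \<sigma> x = poly P (of_real x)" "\<forall>\<sigma> x. g \<sigma> x = poly Q (of_real x)"
        unfolding C_def by blast
      then show "(\<lambda>\<sigma> x. f \<sigma> x * g \<sigma> x) \<in> C" unfolding C_def by (intro CollectI exI[of _ "P * Q"]) simp
    qed
    show "\<forall>f\<in>C. (\<lambda>\<sigma> x. - f \<sigma> x) \<in> C"
    proof (intro ballI)
      fix f assume "f \<in> C"
      then obtain P where "\<forall>\<sigma> x. f \<sigma> x = poly P (of_real x)"
        unfolding C_def by blast
      then show "(\<lambda>\<sigma> x. - f \<sigma> x) \<in> C" unfolding C_def by (intro CollectI exI[of _ "- P"]) simp
    qed
    show "(\<lambda>\<sigma> x. 1) \<in> C" unfolding C_def by (auto intro!: exI[of _ 1])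
    show "\<forall>f\<in>C. \<forall>i\<in>{..<N}. \<forall>\<sigma>. f (\<sigma>(i := True)) = f \<sigma>"
      unfolding C_def by auto
    show "\<forall>i\<in>{..<N}. (\<lambda>\<sigma> x. cc \<omega> i x ^ 2) \<in> C"
    proof
      fix i show "(\<lambda>\<sigma> x. cc \<omega> i x ^ 2) \<in> C"
        unfolding C_def cc_sq by (intro CollectI exI[of _ "[:- of_real ((\<omega> i)^2), 0, 1:]"]) (simp add: power2_eq_square)
    qed
    show "(\<lambda>\<sigma> x. of_real (pp N \<kappa> x)) \<in> C"
      unfolding C_def pp_def
      by (intro CollectI exI[of _ "[:0, - of_real (real N), of_real (real N / \<kappa>):]"]) (simp add: power2_eq_square field_simps)
  qed (simp)
  then show ?thesis unfolding C_def FF_def by auto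
qed



lemma norm_sg: "norm (sg T i) = 1" unfolding sg_def by auto

lemma norm_cc: "norm (cc \<omega> i x) = sqrt \<bar>x^2 - (\<omega> i)^2\<bar>"
  unfolding cc_def by (simp only: norm_csqrt norm_of_real)

lemma FF_bound:
  assumes x: "x \<ge> 1" and k: "\<kappa> \<noteq> 0"
  shows "norm (FF N \<kappa> \<omega> T x) \<le> (real N / \<bar>\<kappa>\<bar> + 2 * real N + (\<Sum>i<N. \<bar>\<omega> i\<bar>)) * x^2"
proof -
  have xx: "x \<le> x^2" using x by (simp add: power2_eq_square)
  have "norm (FF N \<kappa> \<omega> T x) \<le> norm (of_real (pp N \<kappa> x) :: complex) + norm (\<Sum>i<N. sg T i * cc \<omega> i x)"
    unfolding FF_def by (rule norm_triangle_ineq4)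
  moreover have "norm (\<Sum>i<N. sg T i * cc \<omega> i x) \<le> (\<Sum>i<N. x^2 + \<bar>\<omega> i\<bar> * x^2)"
  proof (rule order_trans[OF norm_sum], intro sum_mono)
    fix i
    have "\<bar>x^2 - (\<omega> i)^2\<bar> \<le> (x + \<bar>\<omega> i\<bar>)^2" using x by (simp add: power2_eq_square abs_le_iff algebra_simps)
    then have "sqrt \<bar>x^2 - (\<omega> i)^2\<bar> \<le> sqrt ((x + \<bar>\<omega> i\<bar>)^2)" by (rule real_sqrt_le_mono)
    also have "\<dots> = x + \<bar>\<omega> i\<bar>" using x by simp
    also have "\<dots> \<le> x^2 + \<bar>\<omega> i\<bar> * x^2" using xx x
      by (intro add_mono) (auto simp: mult_le_cancel_left1 intro: mult_left_mono[of 1 "x^2" "\<bar>\<omega> i\<bar>", simplified])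
    finally show "norm (sg T i * cc \<omega> i x) \<le> x^2 + \<bar>\<omega> i\<bar> * x^2"
      by (simp add: norm_mult norm_sg norm_cc)
  qed
  moreover have "norm (of_real (pp N \<kappa> x) :: complex) \<le> real N / \<bar>\<kappa>\<bar> * x^2 + real N * x^2"
  proof -
    have "norm (of_real (pp N \<kappa> x) :: complex) = \<bar>real N * x^2 / \<kappa> - real N * x\<bar>" by (simp only: norm_of_real pp_def)
    also have "\<dots> \<le> \<bar>real N * x^2 / \<kappa>\<bar> + \<bar>real N * x\<bar>" by (rule abs_triangle_ineq4)
    also have "\<dots> \<le> real N / \<bar>\<kappa>\<bar> * x^2 + real N * x^2"
      using x xx by (intro add_mono) (auto simp: abs_mult abs_divide intro: mult_left_mono)
    finally show ?thesis .
  qed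
  ultimately have H: "norm (FF N \<kappa> \<omega> T x) \<le> real N / \<bar>\<kappa>\<bar> * x^2 + real N * x^2 + (\<Sum>i<N. x^2 + \<bar>\<omega> i\<bar> * x^2)" by linarith
  have "(\<Sum>i<N. x^2 + \<bar>\<omega> i\<bar> * x^2) = real N * x^2 + (\<Sum>i<N. \<bar>\<omega> i\<bar>) * x^2"
    by (simp add: sum.distrib sum_distrib_right)
  with H show ?thesis by (simp add: distrib_right)
qed

lemma P_props:
  assumes k: "\<kappa> \<noteq> 0" and N: "N \<ge> 1"
    and P: "\<forall>x. poly P (of_real x) = (\<Prod>T\<in>Pow {..<N}. FF N \<kappa> \<omega> T x)"
  shows "P \<noteq> 0" "degree P \<le> 2 ^ (N + 1)"
proof -
  define x0 where "x0 = 2 * \<bar>\<kappa>\<bar> + (\<Sum>i<N. \<bar>\<omega> i\<bar>) + 1"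
  have s0: "(\<Sum>i<N. \<bar>\<omega> i\<bar>) \<ge> 0" by (simp add: sum_nonneg)
  have x01: "x0 > 2 * \<bar>\<kappa>\<bar>" unfolding x0_def using s0 by linarith
  have x02: "x0 > 0" unfolding x0_def using s0 abs_ge_zero[of \<kappa>] by linarith
  note x0 = x01 x02
  have FFnz: "FF N \<kappa> \<omega> T x0 \<noteq> 0" for T
  proof -
    have "norm (\<Sum>i<N. sg T i * cc \<omega> i x0) \<le> (\<Sum>i<N. x0)"
    proof (rule order_trans[OF norm_sum], intro sum_mono)
      fix i assume "i \<in> {..<N}"
      then have "\<bar>\<omega> i\<bar> \<le> (\<Sum>i<N. \<bar>\<omega> i\<bar>)" by (intro member_le_sum) auto
      then have wi: "\<bar>\<omega> i\<bar> \<le> x0" unfolding x0_def by simp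
      then have "(\<omega> i)^2 \<le> x0^2" by (metis abs_le_square_iff abs_of_pos x0(2))
      then have "\<bar>x0^2 - (\<omega> i)^2\<bar> \<le> x0^2" by simp
      then have "sqrt \<bar>x0^2 - (\<omega> i)^2\<bar> \<le> sqrt (x0^2)" by (rule real_sqrt_le_mono)
      then show "norm (sg T i * cc \<omega> i x0) \<le> x0" using x0 by (simp add: norm_mult norm_sg norm_cc)
    qed
    then have n1: "norm (\<Sum>i<N. sg T i * cc \<omega> i x0) \<le> real N * x0" by simp
    have "\<bar>x0 / \<kappa> - 1\<bar> \<ge> \<bar>x0 / \<kappa>\<bar> - 1" by linarith
    moreover have "\<bar>x0 / \<kappa>\<bar> > 2" using x0 k by (simp add: abs_divide field_simps)
    ultimately have "\<bar>x0 / \<kappa> - 1\<bar> > 1" by linarith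
    then have "real N * x0 * \<bar>x0 / \<kappa> - 1\<bar> > real N * x0 * 1"
      using N x0 by (intro mult_strict_left_mono) auto
    moreover have "\<bar>pp N \<kappa> x0\<bar> = real N * x0 * \<bar>x0 / \<kappa> - 1\<bar>"
    proof -
      have "pp N \<kappa> x0 = real N * x0 * (x0 / \<kappa> - 1)" unfolding pp_def by (simp add: power2_eq_square algebra_simps)
      then show ?thesis using x0 by (simp add: abs_mult)
    qed
    ultimately have n2: "norm (of_real (pp N \<kappa> x0) :: complex) > real N * x0" by simp
    show ?thesis
    proof
      assume "FF N \<kappa> \<omega> T x0 = 0"
      then have "of_real (pp N \<kappa> x0) = (\<Sum>i<N. sg T i * cc \<omega> i x0)" unfolding FF_def by simp
      then show False using n1 n2 by (metis not_less)
    qed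
  qed
  have "poly P (of_real x0) \<noteq> 0" using P FFnz by simp
  then show Pnz: "P \<noteq> 0" by auto
  define M where "M = real N / \<bar>\<kappa>\<bar> + 2 * real N + (\<Sum>i<N. \<bar>\<omega> i\<bar>)"
  have "norm (poly P (of_real x)) \<le> M ^ (2 ^ N) * x ^ (2 ^ (N + 1))" if x: "x \<ge> 1" for x
  proof -
    have "norm (poly P (of_real x)) = (\<Prod>T\<in>Pow {..<N}. norm (FF N \<kappa> \<omega> T x))"
      using P by (simp add: prod_norm)
    also have "\<dots> \<le> (\<Prod>T\<in>Pow {..<N}. M * x^2)"
      using FF_bound[OF x k] unfolding M_def by (intro prod_mono) auto
    also have "\<dots> = (M * x^2) ^ (2 ^ N)" by (simp add: card_Pow)
    also have "\<dots> = M ^ (2 ^ N) * x ^ (2 ^ (N + 1))" by (simp add: power_mult_distrib flip: power_mult)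
    finally show ?thesis .
  qed
  then show "degree P \<le> 2 ^ (N + 1)" by (intro degree_le_of_bound[OF Pnz, of 1]) auto
qed



lemma lipat_sum: "finite W \<Longrightarrow> (\<forall>i\<in>W. lipat r (f i)) \<Longrightarrow> lipat r (\<lambda>x. \<Sum>i\<in>W. f i x)"
proof (induction W rule: finite_induct)
  case empty
  then show ?case using lipat_const[of r 0] by simp
next
  case (insert j W)
  then show ?case by (simp add: lipat_add)
qed

lemma lipat_sq: "lipat r (\<lambda>x. of_real (x^2 - c) :: complex)"
proof -
  have eq: "(\<lambda>x. of_real (x^2 - c) :: complex) = (\<lambda>x. of_real x * of_real x + - of_real c)"
    by (simp add: power2_eq_square)
  show ?thesis unfolding eq by (intro lipat_add lipat_mult lipat_id lipat_neg lipat_const)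
qed

lemma lipat_pp: "lipat r (\<lambda>x. of_real (pp N \<kappa> x) :: complex)"
proof -
  have eq: "(\<lambda>x. of_real (pp N \<kappa> x) :: complex) = (\<lambda>x. of_real (real N / \<kappa>) * (of_real x * of_real x) + - (of_real (real N) * of_real x))"
    by (simp add: pp_def power2_eq_square field_simps)
  show ?thesis unfolding eq by (intro lipat_add lipat_mult lipat_id lipat_neg lipat_const)
qed

lemma local_count:
  assumes P: "\<forall>x. poly P (of_real x) = (\<Prod>T\<in>Pow {..<N}. FF N \<kappa> \<omega> T x)" and Pnz: "P \<noteq> 0"
  shows "finite (DD N \<kappa> \<omega> R0) \<and> card (DD N \<kappa> \<omega> R0) \<le> order (of_real R0) P"
proof (cases "DD N \<kappa> \<omega> R0 = {}")
  case True
  then show ?thesis by simp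
next
  case False
  define D where "D = DD N \<kappa> \<omega> R0"
  obtain d0 where d0: "d0 \<in> D" using False unfolding D_def by blast
  have nonneg: "(\<omega> i)^2 \<le> R0^2" if "i < N" for i
  proof -
    have "(d0 i)^2 = R0^2 - (\<omega> i)^2" using d0 that unfolding D_def DD_def by auto
    moreover have "(d0 i)^2 \<ge> 0" by simp
    ultimately show ?thesis by linarith
  qed
  define W where "W = {i. i < N \<and> (\<omega> i)^2 < R0^2}"
  define Z where "Z = {i. i < N \<and> (\<omega> i)^2 = R0^2}"
  have WZ: "{..<N} = W \<union> Z" using nonneg unfolding W_def Z_def by (auto simp: order.order_iff_strict)
  have WZd: "W \<inter> Z = {}" unfolding W_def Z_def by auto
  have finW: "finite W" and finZ: "finite Z" unfolding W_def Z_def by auto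
  have Dsq: "(d i)^2 = R0^2 - (\<omega> i)^2" if "d \<in> D" "i < N" for d i
    using that unfolding D_def DD_def by auto
  have Dout: "d i = 0" if "d \<in> D" "\<not> i < N" for d i
    using that unfolding D_def DD_def by auto
  have Dsum: "(\<Sum>i<N. d i) = pp N \<kappa> R0" if "d \<in> D" for d
    using that unfolding D_def DD_def by auto
  have dZ: "d i = 0" if "d \<in> D" "i \<in> Z" for d i
  proof -
    have "i < N" "(\<omega> i)^2 = R0^2" using that(2) unfolding Z_def by auto
    then have "(d i)^2 = 0" using Dsq[OF that(1), of i] by simp
    then show ?thesis by simp
  qed
  have dabs: "\<bar>d i\<bar> = sqrt (R0^2 - (\<omega> i)^2)" if "d \<in> D" "i < N" for d i
    using Dsq[OF that] by (metis real_sqrt_abs)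
  have ccZ: "cc \<omega> i R0 = 0" if "i \<in> Z" for i
    using that unfolding Z_def cc_def by simp
  have ccW: "cc \<omega> i R0 = of_real (sqrt (R0^2 - (\<omega> i)^2))" if "i \<in> W" for i
  proof -
    have "R0^2 - (\<omega> i)^2 \<ge> 0" using that unfolding W_def by auto
    then show ?thesis unfolding cc_def by (simp only: of_real_sqrt)
  qed
  define pat where "pat d = {i \<in> W. d i < 0}" for d :: "nat \<Rightarrow> real"
  have inj: "inj_on pat D"
  proof (rule inj_onI)
    fix d d' assume dd: "d \<in> D" "d' \<in> D" "pat d = pat d'"
    show "d = d'"
    proof
      fix i
      show "d i = d' i"
      proof (cases "i < N")
        case False
        then show ?thesis using Dout[OF dd(1) False] Dout[OF dd(2) False] by simp
      next
        case True
        then have "i \<in> W \<or> i \<in> Z" using WZ by auto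
        then show ?thesis
        proof
          assume iZ: "i \<in> Z"
          then show ?thesis using dZ[OF dd(1) iZ] dZ[OF dd(2) iZ] by simp
        next
          assume iW: "i \<in> W"
          have ab: "\<bar>d i\<bar> = \<bar>d' i\<bar>" using dabs[OF dd(1) True] dabs[OF dd(2) True] by simp
          have "i \<in> pat d \<longleftrightarrow> i \<in> pat d'" using dd(3) by simp
          then have sg: "d i < 0 \<longleftrightarrow> d' i < 0" using iW unfolding pat_def by simp
          show ?thesis
          proof (cases "d i < 0")
            case True
            then show ?thesis using ab sg by simp
          next
            case False
            then show ?thesis using ab sg by simp
          qed
        qed
      qed
    qed
  qed
  define A where "A = pat ` D"
  have AW: "A \<subseteq> Pow W" unfolding A_def pat_def by auto
  have finA: "finite A" using AW finW by (meson finite_Pow_iff finite_subset)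
  have finD: "finite D" using finite_imageD[OF _ inj] finA unfolding A_def by blast
  have cardDA: "card D = card A" unfolding A_def using card_image[OF inj] by simp
  define a where "a T1 x = of_real (pp N \<kappa> x) - (\<Sum>i\<in>W. sg T1 i * cc \<omega> i x)" for T1 x
  define Q where "Q T1 x = (\<Prod>T2\<in>Pow Z. a T1 x - (\<Sum>i\<in>Z. sg T2 i * cc \<omega> i x))" for T1 x
  have fact1: "poly P (of_real x) = (\<Prod>T1\<in>Pow W. Q T1 x)" for x
  proof -
    define h where "h = (\<lambda>(T1, T2). T1 \<union> T2 :: nat set)"
    have img: "Pow {..<N} = h ` (Pow W \<times> Pow Z)"
    proof
      show "Pow {..<N} \<subseteq> h ` (Pow W \<times> Pow Z)"
      proof
        fix T assume "T \<in> Pow {..<N}"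
        then have "T = h (T \<inter> W, T \<inter> Z)" "(T \<inter> W, T \<inter> Z) \<in> Pow W \<times> Pow Z"
          using WZ unfolding h_def by auto
        then show "T \<in> h ` (Pow W \<times> Pow Z)" by blast
      qed
      show "h ` (Pow W \<times> Pow Z) \<subseteq> Pow {..<N}" using WZ unfolding h_def by auto
    qed
    have hinj: "inj_on h (Pow W \<times> Pow Z)"
    proof (rule inj_onI)
      fix p q assume pq: "p \<in> Pow W \<times> Pow Z" "q \<in> Pow W \<times> Pow Z" "h p = h q"
      obtain T1 T2 where p: "p = (T1, T2)" by (cases p)
      obtain U1 U2 where q: "q = (U1, U2)" by (cases q)
      have T: "T1 \<subseteq> W" "T2 \<subseteq> Z" "U1 \<subseteq> W" "U2 \<subseteq> Z" using pq(1,2) unfolding p q by auto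
      have e: "T1 \<union> T2 = U1 \<union> U2" using pq(3) unfolding p q h_def by simp
      have "T1 = (T1 \<union> T2) \<inter> W" using T WZd by blast
      also have "\<dots> = (U1 \<union> U2) \<inter> W" using e by (simp only:)
      also have "\<dots> = U1" using T WZd by blast
      finally have 1: "T1 = U1" .
      have "T2 = (T1 \<union> T2) \<inter> Z" using T WZd by blast
      also have "\<dots> = (U1 \<union> U2) \<inter> Z" using e by (simp only:)
      also have "\<dots> = U2" using T WZd by blast
      finally have 2: "T2 = U2" .
      show "p = q" unfolding p q using 1 2 by simp
    qed
    have FFsplit: "FF N \<kappa> \<omega> (T1 \<union> T2) x = a T1 x - (\<Sum>i\<in>Z. sg T2 i * cc \<omega> i x)"
      if "T1 \<subseteq> W" "T2 \<subseteq> Z" for T1 T2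
    proof -
      have "(\<Sum>i<N. sg (T1 \<union> T2) i * cc \<omega> i x)
          = (\<Sum>i\<in>W. sg (T1 \<union> T2) i * cc \<omega> i x) + (\<Sum>i\<in>Z. sg (T1 \<union> T2) i * cc \<omega> i x)"
        unfolding WZ using finW finZ WZd by (rule sum.union_disjoint)
      also have "(\<Sum>i\<in>W. sg (T1 \<union> T2) i * cc \<omega> i x) = (\<Sum>i\<in>W. sg T1 i * cc \<omega> i x)"
        using that WZd by (intro sum.cong refl) (auto simp: sg_def)
      also have "(\<Sum>i\<in>Z. sg (T1 \<union> T2) i * cc \<omega> i x) = (\<Sum>i\<in>Z. sg T2 i * cc \<omega> i x)"
        using that WZd by (intro sum.cong refl) (auto simp: sg_def)
      finally show ?thesis unfolding FF_def a_def by (simp add: algebra_simps)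
    qed
    have "poly P (of_real x) = (\<Prod>T\<in>h ` (Pow W \<times> Pow Z). FF N \<kappa> \<omega> T x)" using P img by simp
    also have "\<dots> = (\<Prod>p\<in>Pow W \<times> Pow Z. FF N \<kappa> \<omega> (h p) x)"
      using prod.reindex[OF hinj] by simp
    also have "\<dots> = (\<Prod>T1\<in>Pow W. \<Prod>T2\<in>Pow Z. FF N \<kappa> \<omega> (h (T1, T2)) x)"
      by (simp add: prod.cartesian_product)
    also have "\<dots> = (\<Prod>T1\<in>Pow W. Q T1 x)"
      unfolding Q_def
    proof (intro prod.cong refl)
      fix T1 T2 assume "T1 \<in> Pow W" "T2 \<in> Pow Z"
      then show "FF N \<kappa> \<omega> (h (T1, T2)) x = a T1 x - (\<Sum>i\<in>Z. sg T2 i * cc \<omega> i x)"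
        using FFsplit[of T1 T2] unfolding h_def by simp
    qed
    finally show ?thesis .
  qed
  have fact2: "lipat R0 (Q T1)" if "T1 \<subseteq> W" for T1
  proof -
    define C :: "((nat \<Rightarrow> bool) \<Rightarrow> real \<Rightarrow> complex) set" where
      "C = {f. (\<forall>\<sigma>. lipat R0 (f \<sigma>)) \<and> (\<forall>i\<in>Z. \<forall>\<sigma>. f (\<sigma>(i := True)) = f \<sigma>)}"
    have "(\<lambda>\<sigma> x. \<Prod>T\<in>Pow Z. a T1 x - (\<Sum>i\<in>Z. sg T i * cc \<omega> i x)) \<in> C"
    proof (rule norm_closed[OF finZ])
      show "\<forall>f\<in>C. \<forall>g\<in>C. (\<lambda>\<sigma> x. f \<sigma> x + g \<sigma> x) \<in> C"
        unfolding C_def by (auto simp: lipat_add)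
      show "\<forall>f\<in>C. \<forall>g\<in>C. (\<lambda>\<sigma> x. f \<sigma> x * g \<sigma> x) \<in> C"
        unfolding C_def by (auto simp: lipat_mult)
      show "\<forall>f\<in>C. (\<lambda>\<sigma> x. - f \<sigma> x) \<in> C"
        unfolding C_def by (auto simp: lipat_neg)
      show "(\<lambda>\<sigma> x. 1) \<in> C"
        unfolding C_def by (auto simp: lipat_const)
      show "\<forall>f\<in>C. \<forall>i\<in>Z. \<forall>\<sigma>. f (\<sigma>(i := True)) = f \<sigma>"
        unfolding C_def by auto
      show "\<forall>i\<in>Z. (\<lambda>\<sigma> x. cc \<omega> i x ^ 2) \<in> C"
      proof (intro ballI)
        fix i assume "i \<in> Z"
        have "lipat R0 (\<lambda>x. cc \<omega> i x ^ 2)" unfolding cc_sq by (rule lipat_sq)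
        then show "(\<lambda>\<sigma> x. cc \<omega> i x ^ 2) \<in> C" unfolding C_def by simp
      qed
      have "lipat R0 (\<lambda>x. sg T1 i * cc \<omega> i x)" if "i \<in> W" for i
      proof -
        have "(\<omega> i)^2 < R0^2" using that unfolding W_def by auto
        then have "lipat R0 (cc \<omega> i)" unfolding cc_def by (rule lipat_csqrt)
        then show ?thesis by (intro lipat_mult lipat_const)
      qed
      then have ls: "lipat R0 (\<lambda>x. \<Sum>i\<in>W. sg T1 i * cc \<omega> i x)"
        by (intro lipat_sum[OF finW]) blast
      have eq: "a T1 = (\<lambda>x. of_real (pp N \<kappa> x) + - (\<Sum>i\<in>W. sg T1 i * cc \<omega> i x))"
        unfolding a_def by (rule ext) simp
      have "lipat R0 (a T1)" unfolding eq by (intro lipat_add lipat_pp lipat_neg ls)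
      then show "(\<lambda>\<sigma> x. a T1 x) \<in> C" unfolding C_def by simp
    qed
    then show ?thesis unfolding C_def Q_def by simp
  qed
  have fact3: "Q T1 R0 = 0" if TA: "T1 \<in> A" for T1
  proof -
    obtain d where d: "d \<in> D" and T1: "T1 = pat d" using TA unfolding A_def by blast
    have "(\<Sum>i\<in>W. sg T1 i * cc \<omega> i R0) = (\<Sum>i\<in>W. of_real (d i))"
    proof (intro sum.cong refl)
      fix i assume iW: "i \<in> W"
      then have "i < N" unfolding W_def by auto
      then have e: "cc \<omega> i R0 = of_real \<bar>d i\<bar>" using ccW[OF iW] dabs[OF d] by metis
      show "sg T1 i * cc \<omega> i R0 = of_real (d i)"
      proof (cases "d i < 0")
        case True
        then have "sg T1 i = -1" using iW unfolding T1 pat_def sg_def by simp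
        then show ?thesis using e True by simp
      next
        case False
        then have "sg T1 i = 1" using iW unfolding T1 pat_def sg_def by simp
        then show ?thesis using e False by simp
      qed
    qed
    also have "\<dots> = of_real (\<Sum>i\<in>W. d i)" by simp
    also have "(\<Sum>i\<in>W. d i) = (\<Sum>i<N. d i)"
    proof -
      have "(\<Sum>i<N. d i) = (\<Sum>i\<in>W. d i) + (\<Sum>i\<in>Z. d i)"
        unfolding WZ using finW finZ WZd by (rule sum.union_disjoint)
      also have "(\<Sum>i\<in>Z. d i) = 0" using dZ[OF d] by simp
      finally show ?thesis by simp
    qed
    also have "\<dots> = pp N \<kappa> R0" using Dsum[OF d] .
    finally have aT: "a T1 R0 = 0" unfolding a_def by simp
    have "a T1 R0 - (\<Sum>i\<in>Z. sg {} i * cc \<omega> i R0) = 0" using aT ccZ by simp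
    then show ?thesis unfolding Q_def using finZ by (subst prod_zero_iff) auto
  qed
  have ex: "\<exists>K. eventually (\<lambda>x. norm (\<Prod>T1\<in>Pow W. Q T1 x) \<le> K * \<bar>x - R0\<bar> ^ (\<Sum>T1\<in>Pow W. (if T1 \<in> A then 1 else 0))) (nhds R0)"
  proof (rule prod_bound)
    show "finite (Pow W)" using finW by simp
    show "\<forall>T1\<in>Pow W. \<exists>K. eventually (\<lambda>x. norm (Q T1 x) \<le> K * \<bar>x - R0\<bar> ^ (if T1 \<in> A then 1 else 0)) (nhds R0)"
    proof
      fix T1 assume "T1 \<in> Pow W"
      then have l: "lipat R0 (Q T1)" using fact2 by auto
      show "\<exists>K. eventually (\<lambda>x. norm (Q T1 x) \<le> K * \<bar>x - R0\<bar> ^ (if T1 \<in> A then 1 else 0)) (nhds R0)"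
      proof (cases "T1 \<in> A")
        case True
        then show ?thesis using lipat_zero[OF l fact3[OF True]] by simp
      next
        case False
        then show ?thesis using lipat_bound0[OF l] by simp
      qed
    qed
  qed
  have "(\<Sum>T1\<in>Pow W. (if T1 \<in> A then 1 else 0)) = card (Pow W \<inter> A)"
    using finW by (simp add: sum.inter_restrict[symmetric])
  also have "Pow W \<inter> A = A" using AW by auto
  finally have sA: "(\<Sum>T1\<in>Pow W. (if T1 \<in> A then 1 else 0)) = card A" .
  obtain K where "eventually (\<lambda>x. norm (poly P (of_real x)) \<le> K * \<bar>x - R0\<bar> ^ card A) (nhds R0)"
    using ex unfolding sA fact1[symmetric] by blast
  then have "card A \<le> order (of_real R0) P" by (rule order_ge_of_bound[OF Pnz])
  then show ?thesis using finD cardDA unfolding D_def by simp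
qed



theorem theorem2p22:
  fixes N :: nat and \<omega> :: "nat \<Rightarrow> real" and \<kappa> :: real and S :: "(nat \<Rightarrow> real) set"
  assumes "N \<ge> 1" and "\<kappa> \<noteq> 0"
    and "\<And>\<theta>. \<theta> \<in> S \<Longrightarrow> is_equilibrium N \<omega> \<kappa> \<theta>"
    and "\<And>\<theta> \<phi>. \<theta> \<in> S \<Longrightarrow> \<phi> \<in> S \<Longrightarrow> \<theta> \<noteq> \<phi> \<Longrightarrow> \<not> cong_2pi N \<theta> \<phi>"
  shows "finite S \<and> card S \<le> 2 ^ (N + 1)"
proof -
  obtain P where P: "\<forall>x. poly P (of_real x) = (\<Prod>T\<in>Pow {..<N}. FF N \<kappa> \<omega> T x)"
    using poly_exists by blast
  have Pnz: "P \<noteq> 0" and degP: "degree P \<le> 2 ^ (N + 1)"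
    using P_props[OF assms(2,1) P] by auto
  have Npos: "real N > 0" using assms(1) by simp
  define Rf where "Rf \<theta> = \<kappa> / real N * (\<Sum>j<N. 1 + cos (\<theta> j))" for \<theta> :: "nat \<Rightarrow> real"
  define df where "df \<theta> = (\<lambda>i. if i < N then Rf \<theta> * cos (\<theta> i) else 0)" for \<theta> :: "nat \<Rightarrow> real"
  define g where "g \<theta> = (Rf \<theta>, df \<theta>)" for \<theta> :: "nat \<Rightarrow> real"
  have eqw: "\<omega> i = Rf \<theta> * sin (\<theta> i)" if "\<theta> \<in> S" "i < N" for \<theta> i
    using assms(3)[OF that(1)] that(2) unfolding is_equilibrium_def rhs_def Rf_def by auto
  have sumR: "(\<Sum>j<N. 1 + cos (\<theta> j)) = real N * Rf \<theta> / \<kappa>" for \<theta>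
    unfolding Rf_def using Npos assms(2) by (simp add: field_simps)
  have gD: "df \<theta> \<in> DD N \<kappa> \<omega> (Rf \<theta>)" if th: "\<theta> \<in> S" for \<theta>
  proof -
    have "(df \<theta> i)^2 = (Rf \<theta>)^2 - (\<omega> i)^2" if "i < N" for i
    proof -
      have "(Rf \<theta>)^2 - (\<omega> i)^2 = (Rf \<theta>)^2 * (1 - (sin (\<theta> i))^2)"
        using eqw[OF th that] by (simp add: power_mult_distrib algebra_simps)
      also have "1 - (sin (\<theta> i))^2 = (cos (\<theta> i))^2" by (simp add: cos_squared_eq)
      finally show ?thesis using that unfolding df_def by (simp add: power_mult_distrib)
    qed
    moreover have "(\<Sum>i<N. df \<theta> i) = pp N \<kappa> (Rf \<theta>)"
    proof -
      have "(\<Sum>i<N. df \<theta> i) = Rf \<theta> * (\<Sum>i<N. cos (\<theta> i))"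
        unfolding df_def by (simp add: sum_distrib_left)
      also have "(\<Sum>i<N. cos (\<theta> i)) = real N * Rf \<theta> / \<kappa> - real N"
        using sumR[of \<theta>] by (simp add: sum.distrib)
      finally show ?thesis unfolding pp_def by (simp add: power2_eq_square algebra_simps)
    qed
    ultimately show ?thesis unfolding DD_def df_def by auto
  qed
  have sc: "sin (\<theta> i) = sin (\<phi> i) \<and> cos (\<theta> i) = cos (\<phi> i)"
    if th: "\<theta> \<in> S" "\<phi> \<in> S" "g \<theta> = g \<phi>" "i < N" for \<theta> \<phi> i
  proof -
    have R: "Rf \<theta> = Rf \<phi>" and d: "df \<theta> = df \<phi>" using th(3) unfolding g_def by auto
    show ?thesis
    proof (cases "Rf \<theta> = 0")
      case False
      have "Rf \<theta> * sin (\<theta> i) = Rf \<theta> * sin (\<phi> i)" using eqw[OF th(1,4)] eqw[OF th(2,4)] R by metis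
      moreover have "Rf \<theta> * cos (\<theta> i) = Rf \<theta> * cos (\<phi> i)"
        using fun_cong[OF d, of i] th(4) R unfolding df_def by simp
      ultimately show ?thesis using False by simp
    next
      case True
      have cm1: "cos (\<psi> i) = -1 \<and> sin (\<psi> i) = 0" if "Rf \<psi> = 0" for \<psi>
      proof -
        have "(\<Sum>j<N. 1 + cos (\<psi> j)) = 0" using sumR[of \<psi>] that by simp
        moreover have "\<forall>j\<in>{..<N}. 0 \<le> 1 + cos (\<psi> j)"
        proof
          fix j
          have "-1 \<le> cos (\<psi> j)" by (rule cos_ge_minus_one)
          then show "0 \<le> 1 + cos (\<psi> j)" by linarith
        qed
        ultimately have "\<forall>j\<in>{..<N}. 1 + cos (\<psi> j) = 0"
          using sum_nonneg_eq_0_iff[of "{..<N}" "\<lambda>j. 1 + cos (\<psi> j)"] by simp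
        then have "1 + cos (\<psi> i) = 0" using th(4) by simp
        then have c: "cos (\<psi> i) = -1" by simp
        then have "(sin (\<psi> i))^2 = 0" using sin_squared_eq[of "\<psi> i"] by simp
        then show ?thesis using c by simp
      qed
      show ?thesis using cm1[of \<theta>] cm1[of \<phi>] True R by simp
    qed
  qed
  have inj: "inj_on g S"
  proof (rule inj_onI, rule ccontr)
    fix \<theta> \<phi> assume th: "\<theta> \<in> S" "\<phi> \<in> S" "g \<theta> = g \<phi>" "\<theta> \<noteq> \<phi>"
    have "cong_2pi N \<theta> \<phi>" unfolding cong_2pi_def
    proof (intro allI impI)
      fix i assume i: "i < N"
      have "cos (\<theta> i - \<phi> i) = 1"
        using sc[OF th(1,2,3) i] by (simp add: cos_diff)
      then obtain n :: int where "\<theta> i - \<phi> i = of_int n * 2 * pi" using cos_one_2pi_int by blast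
      then show "\<exists>k::int. \<theta> i - \<phi> i = 2 * pi * of_int k" by (intro exI[of _ n]) simp
    qed
    then show False using assms(4)[OF th(1,2,4)] by simp
  qed
  define Rs where "Rs = fst ` g ` S"
  have DDne: "DD N \<kappa> \<omega> R0 \<noteq> {}" if R0in: "R0 \<in> Rs" for R0
  proof -
    obtain \<theta> where "\<theta> \<in> S" "R0 = Rf \<theta>" using R0in unfolding Rs_def g_def by auto
    then show ?thesis using gD[of \<theta>] by auto
  qed
  have Rsroot: "poly P (of_real R0) = 0" if "R0 \<in> Rs" for R0
  proof -
    have "finite (DD N \<kappa> \<omega> R0)" "card (DD N \<kappa> \<omega> R0) \<le> order (of_real R0) P"
      using local_count[OF P Pnz] by auto
    then have "order (of_real R0) P \<noteq> 0" using DDne[OF that] by (metis card_0_eq le_zero_eq)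
    then show ?thesis by (simp add: order_root)
  qed
  have finRs: "finite Rs"
  proof -
    have "Rs \<subseteq> of_real -` {z. poly P z = 0}" using Rsroot by auto
    moreover have "finite (of_real -` {z. poly P z = 0} :: real set)"
      by (rule finite_vimageI[OF poly_roots_finite[OF Pnz]]) (simp add: inj_def)
    ultimately show ?thesis by (rule finite_subset)
  qed
  have sub: "g ` S \<subseteq> Sigma Rs (DD N \<kappa> \<omega>)"
  proof
    fix p assume "p \<in> g ` S"
    then obtain \<theta> where th: "\<theta> \<in> S" "p = g \<theta>" by blast
    have "Rf \<theta> \<in> Rs" unfolding Rs_def using th(1) by (metis fst_conv g_def image_eqI)
    then show "p \<in> Sigma Rs (DD N \<kappa> \<omega>)" using gD[OF th(1)] th(2) unfolding g_def by simp
  qed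
  have finSig: "finite (Sigma Rs (DD N \<kappa> \<omega>))"
    using finRs local_count[OF P Pnz] by (intro finite_SigmaI) auto
  have finS: "finite S" using finite_imageD[OF finite_subset[OF sub finSig] inj] .
  have "card S = card (g ` S)" using card_image[OF inj] by simp
  also have "\<dots> \<le> card (Sigma Rs (DD N \<kappa> \<omega>))" using card_mono[OF finSig sub] .
  also have "\<dots> = (\<Sum>R0\<in>Rs. card (DD N \<kappa> \<omega> R0))"
    using finRs local_count[OF P Pnz] by (intro card_SigmaI) auto
  also have "\<dots> \<le> (\<Sum>R0\<in>Rs. order (of_real R0) P)"
    using local_count[OF P Pnz] by (intro sum_mono) auto
  also have "\<dots> = (\<Sum>r\<in>of_real ` Rs. order r P)"
    by (subst sum.reindex) (auto simp: inj_on_def)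
  also have "\<dots> \<le> degree P" using sum_order_le[OF Pnz] finRs by simp
  also have "\<dots> \<le> 2 ^ (N + 1)" using degP .
  finally show ?thesis using finS by simp
qed

end
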